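(* Let $n\ge2$ and let $P_X$ be a probability distribution on $[0,1]$ with $P_X((0,1))>0$. Let $q_y:=\int\binom{n}{y}x^y(1-x)^{n-y}\,dP_X(x)$, $y=0,\dots,n$, be the induced output pmf. Then $q_y>0$ for all $y$, and for every $y\in\{1,\dots,n-1\}$, \[ \frac{q_{y+1}\,q_{y-1}}{q_y^2}\ \ge\ \frac{y(n-y)}{(y+1)(n-y+1)}. \] *)

theory Defs
  imports "HOL-Probability.Probability"
begin

definition binom_out :: "real measure \<Rightarrow> nat \<Rightarrow> nat \<Rightarrow> real" where
  "binom_out M n y = (\<integral>x. real (n choose y) * x ^ y * (1 - x) ^ (n - y) \<partial>M)"

end

theory Submission
  imports Defs
begin

lemma binom_step: "(n choose Suc k) * Suc k = (n choose k) * (n - k)"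
proof (cases n)
  case 0 then show ?thesis by simp
next
  case (Suc m)
  have "(n choose Suc k) * Suc k = Suc m * (m choose k)" using Suc Suc_times_binomial_eq[of m k] by simp
  also have "\<dots> = (n - k) * (n choose k)" using binomial_absorb_comp[of n k] Suc by simp
  finally show ?thesis by simp
qed

lemma alg_helper:
  fixes c p q s t A B C :: real
  assumes "c > 0" "q > 0" "t > 0" "B > 0"
  shows "(c * p / q * A) * (c * s / t * C) / (c * B)^2 = (s * p) / (q * t) * (A * C / B^2)"
  using assms by (simp add: field_simps power2_eq_square)

lemma poly_integrable:
  fixes M :: "real measure"
  assumes P: "prob_space M" and S: "sets M = sets borel" and AE01: "AE x in M. x \<in> {0..1}"
  shows "integrable M (\<lambda>x. c * x ^ a * (1 - x) ^ b)"
proof -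
  interpret prob_space M by (rule P)
  have m: "(\<lambda>x::real. c * x ^ a * (1 - x) ^ b) \<in> borel_measurable M"
  proof -
    have "(\<lambda>x::real. c * x ^ a * (1 - x) ^ b) \<in> borel_measurable borel" by measurable
    then show ?thesis by (subst measurable_cong_sets[OF S refl])
  qed
  show ?thesis
  proof (rule integrable_const_bound[where B="\<bar>c\<bar>"])
    show "AE x in M. norm (c * x ^ a * (1 - x) ^ b) \<le> \<bar>c\<bar>"
      using AE01
    proof (rule AE_mp, intro AE_I2 impI)
      fix x :: real assume x: "x \<in> {0..1}"
      have "\<bar>x ^ a\<bar> \<le> 1" using x by (simp add: power_le_one power_abs)
      moreover have "\<bar>(1 - x) ^ b\<bar> \<le> 1" using x by (simp add: power_le_one power_abs)
      ultimately have "\<bar>x ^ a * (1 - x) ^ b\<bar> \<le> 1"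
        by (metis abs_mult abs_ge_zero mult_le_one)
      then show "norm (c * x ^ a * (1 - x) ^ b) \<le> \<bar>c\<bar>"
        by (simp add: abs_mult mult.assoc mult_left_le)
    qed
  qed (rule m)
qed

lemma poly_pos:
  fixes M :: "real measure"
  assumes P: "prob_space M" and S: "sets M = sets borel" and AE01: "AE x in M. x \<in> {0..1}"
    and pos: "measure M {0<..<1} > 0"
  shows "(\<integral>x. x ^ a * (1 - x) ^ b \<partial>M) > 0"
proof -
  interpret prob_space M by (rule P)
  have I: "integrable M (\<lambda>x. 1 * x ^ a * (1 - x) ^ b)"
    by (rule poly_integrable[OF P S AE01])
  have nn: "AE x in M. 0 \<le> 1 * x ^ a * (1 - x) ^ b"
    using AE01 by eventually_elim auto
  have ge: "(\<integral>x. 1 * x ^ a * (1 - x) ^ b \<partial>M) \<ge> 0"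
    using nn by (rule integral_nonneg_AE)
  have ne: "(\<integral>x. 1 * x ^ a * (1 - x) ^ b \<partial>M) \<noteq> 0"
  proof
    assume "(\<integral>x. 1 * x ^ a * (1 - x) ^ b \<partial>M) = 0"
    then have "AE x in M. 1 * x ^ a * (1 - x) ^ b = 0"
      using integral_nonneg_eq_0_iff_AE[OF I nn] by simp
    then have "AE x in M. x \<notin> {0<..<1}"
      by eventually_elim auto
    moreover have "{0<..<1::real} \<in> sets M" using S by simp
    moreover have "space M = UNIV" using sets_eq_imp_space_eq[OF S] by simp
    then have "{x\<in>space M. \<not> (x \<notin> {0<..<1::real})} = {0<..<1}" by auto
    ultimately have "emeasure M {0<..<1} = 0"
      using AE_iff_measurable[of "{0<..<1}" M "\<lambda>x. x \<notin> {0<..<1}"]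
      by blast
    then show False using pos by (simp add: measure_def)
  qed
  show ?thesis using ge ne by simp
qed

lemma quad_ineq:
  fixes A B C :: "real \<Rightarrow> real" and M :: "real measure"
  assumes IA: "integrable M A" and IB: "integrable M B" and IC: "integrable M C"
    and pw: "AE x in M. 0 \<le> A x \<and> 0 \<le> C x \<and> (B x)^2 \<le> A x * C x"
    and Apos: "integral\<^sup>L M A > 0"
  shows "(integral\<^sup>L M B)^2 \<le> integral\<^sup>L M A * integral\<^sup>L M C"
proof -
  define t where "t = integral\<^sup>L M B / integral\<^sup>L M A"
  have "AE x in M. 0 \<le> t^2 * A x - 2 * t * B x + C x"
    using pw
  proof eventually_elim
    case (elim x)
    then have a: "0 \<le> A x" and c: "0 \<le> C x" and q: "(B x)^2 \<le> A x * C x" by auto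
    show ?case
    proof (cases "A x = 0")
      case True
      then have "(B x)^2 \<le> 0" using q by simp
      then have "B x = 0" by simp
      then show ?thesis using True c by simp
    next
      case False
      then have ap: "A x > 0" using a by simp
      have "A x * (t^2 * A x - 2 * t * B x + C x) = (t * A x - B x)^2 + (A x * C x - (B x)^2)"
        by (simp add: algebra_simps power2_eq_square)
      also have "\<dots> \<ge> 0" using q by simp
      finally show ?thesis using ap by (simp add: zero_le_mult_iff)
    qed
  qed
  then have "0 \<le> integral\<^sup>L M (\<lambda>x. t^2 * A x - 2 * t * B x + C x)"
    by (rule integral_nonneg_AE)
  also have "\<dots> = t^2 * integral\<^sup>L M A - 2 * t * integral\<^sup>L M B + integral\<^sup>L M C"
    using IA IB IC by simp
  finally have h: "0 \<le> t^2 * integral\<^sup>L M A - 2 * t * integral\<^sup>L M B + integral\<^sup>L M C" .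
  have "integral\<^sup>L M A * (t^2 * integral\<^sup>L M A - 2 * t * integral\<^sup>L M B + integral\<^sup>L M C)
      = integral\<^sup>L M A * integral\<^sup>L M C - (integral\<^sup>L M B)^2"
    using Apos by (simp add: t_def field_simps power2_eq_square)
  moreover have "0 \<le> integral\<^sup>L M A * (t^2 * integral\<^sup>L M A - 2 * t * integral\<^sup>L M B + integral\<^sup>L M C)"
    using Apos h by simp
  ultimately show ?thesis by simp
qed

theorem mainTheorem13:
  fixes M :: "real measure" and n :: nat
  assumes "n \<ge> 2"
    and "prob_space M"
    and "sets M = sets borel"
    and "measure M {0..1} = 1"
    and "measure M {0<..<1} > 0"
  shows "(\<forall>y\<le>n. binom_out M n y > 0) \<and>
         (\<forall>y\<in>{1..n-1}. binom_out M n (y+1) * binom_out M n (y-1) / (binom_out M n y)^2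
            \<ge> real (y * (n - y)) / real ((y + 1) * (n - y + 1)))"
proof -
  interpret prob_space M by (rule assms(2))
  have AE01: "AE x in M. x \<in> {0..1}"
    using assms(4) by (intro AE_prob_1) simp
  note P = assms(2) and S = assms(3)
  define m where "m k = (\<integral>x. x ^ k * (1 - x) ^ (n - k) \<partial>M)" for k
  have bo: "binom_out M n k = real (n choose k) * m k" for k
  proof -
    have "binom_out M n k = (\<integral>x. real (n choose k) * (x ^ k * (1 - x) ^ (n - k)) \<partial>M)"
      unfolding binom_out_def by (simp add: mult.assoc)
    also have "\<dots> = real (n choose k) * m k" unfolding m_def by simp
    finally show ?thesis .
  qed
  have mpos: "m k > 0" for k
    unfolding m_def by (rule poly_pos[OF P S AE01 assms(5)])
  have part1: "\<forall>y\<le>n. binom_out M n y > 0"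
    using mpos by (auto simp: bo)
  have part2: "binom_out M n (y+1) * binom_out M n (y-1) / (binom_out M n y)^2
            \<ge> real (y * (n - y)) / real ((y + 1) * (n - y + 1))" if y: "y \<in> {1..n-1}" for y
  proof -
    have y1: "1 \<le> y" and y2: "y + 1 \<le> n" using y assms(1) by auto
    obtain k where k: "y = Suc k" using y1 by (cases y) auto
    obtain j where j: "n - y = Suc j" using y2 by (metis Suc_diff_Suc Suc_eq_plus1 add_leD1 le_eq_less_or_eq less_eq_Suc_le)
    have j1: "n - (y+1) = j" and j2: "n - (y-1) = Suc (Suc j)" using j k by auto
    define g where "g x = x ^ k * (1 - x) ^ j" for x :: real
    have eA: "x ^ (y+1) * (1 - x) ^ (n - (y+1)) = g x * x^2" for x :: real
      using j1 unfolding g_def k by (simp add: power2_eq_square algebra_simps)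
    have eC: "x ^ (y-1) * (1 - x) ^ (n - (y-1)) = g x * (1-x)^2" for x :: real
      using j2 unfolding g_def k by (simp add: power2_eq_square algebra_simps)
    have eB: "x ^ y * (1 - x) ^ (n - y) = g x * (x * (1-x))" for x :: real
    proof -
      have jj: "n - Suc k = Suc j" using j k by simp
      show ?thesis unfolding g_def k jj by (simp add: ac_simps)
    qed
    have IA: "integrable M (\<lambda>x. x ^ (y+1) * (1 - x) ^ (n - (y+1)))"
      using poly_integrable[OF P S AE01, of 1 "y+1" "n-(y+1)"] by (simp del: power_Suc)
    have IB: "integrable M (\<lambda>x. x ^ y * (1 - x) ^ (n - y))"
      using poly_integrable[OF P S AE01, of 1] by simp
    have IC: "integrable M (\<lambda>x. x ^ (y-1) * (1 - x) ^ (n - (y-1)))"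
      using poly_integrable[OF P S AE01, of 1] by simp
    have pw: "AE x in M. 0 \<le> x ^ (y+1) * (1 - x) ^ (n - (y+1)) \<and> 0 \<le> x ^ (y-1) * (1 - x) ^ (n - (y-1))
        \<and> (x ^ y * (1 - x) ^ (n - y))^2 \<le> x ^ (y+1) * (1 - x) ^ (n - (y+1)) * (x ^ (y-1) * (1 - x) ^ (n - (y-1)))"
      using AE01
    proof eventually_elim
      case (elim x)
      then have g0: "0 \<le> g x" unfolding g_def by simp
      have sq: "(g x * (x * (1-x)))^2 = g x * x^2 * (g x * (1-x)^2)"
        by (simp add: power2_eq_square algebra_simps)
      show ?case unfolding eA eB eC sq using g0 by simp
    qed
    have key: "(m y)^2 \<le> m (y+1) * m (y-1)"
      unfolding m_def by (rule quad_ineq[OF IA IB IC pw]) (use mpos[of "y+1"] in \<open>simp only: m_def\<close>)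
    have b1: "real (n choose (y+1)) * real (y+1) = real (n choose y) * real (n - y)"
    proof -
      have "(n choose (y+1)) * (y+1) = (n choose y) * (n - y)"
        using binom_step[of n y] by simp
      then show ?thesis by (metis of_nat_mult)
    qed
    have b2: "real (n choose (y-1)) * real (n - y + 1) = real (n choose y) * real y"
    proof -
      have "(n choose (y-1)) * (n - y + 1) = (n choose y) * y"
      proof -
        have "(n choose (Suc (y-1))) * Suc (y-1) = (n choose (y-1)) * (n - (y-1))"
          by (rule binom_step)
        then show ?thesis using y1 y2 by (simp add: Suc_diff_le)
      qed
      then show ?thesis by (metis of_nat_mult)
    qed
    define r where "r = real (y * (n - y)) / real ((y + 1) * (n - y + 1))"
    have cpos: "real (n choose y) > 0" using y2 by simp
    have c1: "real (n choose (y+1)) = real (n choose y) * real (n - y) / real (y+1)"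
      using b1 by (simp add: field_simps)
    have c0: "real (n choose (y-1)) = real (n choose y) * real y / real (n - y + 1)"
      using b2 by (simp add: field_simps)
    have myp: "m y > 0" by (rule mpos)
    have eq: "binom_out M n (y+1) * binom_out M n (y-1) / (binom_out M n y)^2
        = r * (m (y+1) * m (y-1) / (m y)^2)"
      unfolding bo c1 c0 r_def of_nat_mult
      by (rule alg_helper[OF cpos _ _ myp]) auto
    have "1 \<le> m (y+1) * m (y-1) / (m y)^2" using key myp by simp
    moreover have "r \<ge> 0" unfolding r_def by simp
    ultimately have "r * 1 \<le> r * (m (y+1) * m (y-1) / (m y)^2)"
      by (intro mult_left_mono) auto
    then show ?thesis unfolding eq r_def by simp
  qed
  show ?thesis using part1 part2 by blast
qed

end
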